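(* Let $\mathcal A\subset\mathbb R^d$ be finite and nonempty, $\mathcal D=\mathrm{conv}(\mathcal A)$, and let $f$ be convex and differentiable on an open set containing $\mathcal D$ and $\mu$-strongly convex on $\mathcal D$ with respect to the Euclidean norm, $\mu\ge0$ (i.e. $f(y)-f(x)-\langle\nabla f(x),y-x\rangle\ge\frac\mu2\|y-x\|^2$ for all $x,y\in\mathcal D$). Then $\mu_f^{A}\ge\mu\cdot\mathrm{PWidth}(\mathcal A)^2$.
   Context: Euclidean norm and inner product. For a finite $\mathcal B\subseteq\mathbb R^d$ and $x\in\mathrm{conv}(\mathcal B)$, $\mathcal S_x(\mathcal B)$ is the family of subsets $S\subseteq\mathcal B$ such that $x$ is a proper convex combination of all elements of $S$ (all coefficients positive); write $\mathcal S_x=\mathcal S_x(\mathcal A)$. For $r\ne0$, $\mathrm{PdirW}(\mathcal B,r,x):=\min_{S\in\mathcal S_x(\mathcal B)}\max_{s\in\mathcal B,\,v\in S}\langle r/\|r\|,s-v\rangle$, and $\mathrm{PWidth}(\mathcal A):=\inf\{\mathrm{PdirW}(\mathcal K\cap\mathcal A,r,x)\}$ over all nonempty faces $\mathcal K$ of $\mathrm{conv}(\mathcal A)$ (including itself), $x\in\mathcal K$, $r\in\mathrm{cone}(\mathcal K-x)\setminus\{0\}$. For $x\in\mathcal D$: $s_f(x)\in\arg\min_{a\in\mathcal A}\langle\nabla f(x),a\rangle$; for $S\in\mathcal S_x$, $v_S(x)\in\arg\max_{v\in S}\langle\nabla f(x),v\rangle$; $v_f(x)$ is an element of $\{v_S(x):S\in\mathcal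 S_x\}$ minimizing $\langle\nabla f(x),\cdot\rangle$. For $x,x^*\in\mathcal D$ with $\langle\nabla f(x),x^*-x\rangle<0$, $\gamma^{A}(x,x^* ):=\frac{\langle-\nabla f(x),x^*-x\rangle}{\langle-\nabla f(x),s_f(x)-v_f(x)\rangle}$, and $\mu_f^{A}:=\inf_{x\in\mathcal D}\inf_{x^*\in\mathcal D:\langle\nabla f(x),x^*-x\rangle<0}\frac{2}{\gamma^{A}(x,x^* )^2}\big(f(x^* )-f(x)-\langle\nabla f(x),x^*-x\rangle\big)$ (an infimum over the empty set is $+\infty$). *)

theory Defs
  imports "HOL-Analysis.Analysis"
begin

definition proper_supports :: "'a::euclidean_space set \<Rightarrow> 'a \<Rightarrow> 'a set set" where
  "proper_supports B x = {S. S \<subseteq> B \<and> (\<exists>c. (\<forall>v\<in>S. c v > 0) \<and> sum c S = 1 \<and>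
      (\<Sum>v\<in>S. c v *\<^sub>R v) = x)}"

definition PdirW :: "'a::euclidean_space set \<Rightarrow> 'a \<Rightarrow> 'a \<Rightarrow> real" where
  "PdirW B r x = Min ((\<lambda>S. Max {(r /\<^sub>R norm r) \<bullet> (s - v) | s v. s \<in> B \<and> v \<in> S})
                        ` proper_supports B x)"

text \<open>PWidth(A), as an extended real (infimum over the empty set is +infinity).\<close>
definition PWidth :: "'a::euclidean_space set \<Rightarrow> ereal" where
  "PWidth A = Inf {ereal (PdirW (K \<inter> A) r x) | K x r.
      K face_of convex hull A \<and> K \<noteq> {} \<and> x \<in> K \<and>
      r \<in> conic hull ((\<lambda>y. y - x) ` K) \<and> r \<noteq> 0}"

text \<open>The denominator
  <-g x, s_f(x) - v_f(x)> is written through the values of the argmin/argmax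
  (it does not depend on the choice of s_f(x), v_S(x), v_f(x)):
  <g x, s_f x> = min over a in A of <g x, a>, and
  <g x, v_f x> = min over S in S_x of max over v in S of <g x, v>.\<close>
definition gammaA :: "'a::euclidean_space set \<Rightarrow> ('a \<Rightarrow> 'a) \<Rightarrow> 'a \<Rightarrow> 'a \<Rightarrow> real" where
  "gammaA A g x xs =
     ((- g x) \<bullet> (xs - x)) /
     (- (Min ((\<lambda>a. g x \<bullet> a) ` A))
      + Min ((\<lambda>S. Max ((\<lambda>v. g x \<bullet> v) ` S)) ` proper_supports A x))"

text \<open>mu_f^A as an extended real (infimum over the empty set is +infinity).\<close>
definition muA :: "'a::euclidean_space set \<Rightarrow> ('a \<Rightarrow> real) \<Rightarrow> ('a \<Rightarrow> 'a) \<Rightarrow> ereal" where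
  "muA A f g = Inf {ereal (2 / (gammaA A g x xs)\<^sup>2 * (f xs - f x - g x \<bullet> (xs - x))) | x xs.
      x \<in> convex hull A \<and> xs \<in> convex hull A \<and> g x \<bullet> (xs - x) < 0}"

end

theory Submission
  imports Defs
begin


lemma fin_pairs: "finite B \<Longrightarrow> finite S \<Longrightarrow> finite {F s v | s v. s \<in> B \<and> v \<in> S}"
proof -
  assume "finite B" "finite S"
  have "{F s v | s v. s \<in> B \<and> v \<in> S} = (\<lambda>(s,v). F s v) ` (B \<times> S)" by auto
  then show ?thesis using \<open>finite B\<close> \<open>finite S\<close> by simp
qed

lemma ps_finite: "finite B \<Longrightarrow> finite (proper_supports B x)"
  by (rule finite_subset[of _ "Pow B"]) (auto simp: proper_supports_def)

lemma ps_elem: assumes "S \<in> proper_supports B x" "finite B"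
  shows "S \<noteq> {}" "finite S" "S \<subseteq> B"
proof -
  show "S \<subseteq> B" using assms by (auto simp: proper_supports_def)
  then show "finite S" using assms finite_subset by blast
  show "S \<noteq> {}" using assms by (auto simp: proper_supports_def)
qed

lemma ps_nonempty: assumes "finite B" "x \<in> convex hull B" shows "proper_supports B x \<noteq> {}"
proof -
  have "\<exists>u. (\<forall>y\<in>B. 0 \<le> u y) \<and> sum u B = 1 \<and> (\<Sum>y\<in>B. u y *\<^sub>R y) = x"
    using assms(2) unfolding convex_hull_finite[OF assms(1)] by simp
  then obtain u where u: "\<forall>y\<in>B. 0 \<le> u y" "sum u B = 1" "(\<Sum>y\<in>B. u y *\<^sub>R y) = x"
    by blast
  define S where "S = {v\<in>B. u v > 0}"
  have SB: "S \<subseteq> B" unfolding S_def by auto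
  have z: "\<forall>i\<in>B - S. u i = 0" using u(1) unfolding S_def by force
  have "sum u S = sum u B"
    by (rule sum.mono_neutral_left[OF assms(1) SB]) (use z in simp)
  moreover have "(\<Sum>y\<in>S. u y *\<^sub>R y) = (\<Sum>y\<in>B. u y *\<^sub>R y)"
    by (rule sum.mono_neutral_left[OF assms(1) SB]) (use z in simp)
  ultimately have s1: "sum u S = 1" and s2: "(\<Sum>y\<in>S. u y *\<^sub>R y) = x"
    using u(2,3) by simp_all
  have pos: "\<forall>v\<in>S. u v > 0" unfolding S_def by auto
  have "S \<in> proper_supports B x" unfolding proper_supports_def
    using SB pos s1 s2 by (intro CollectI conjI exI[of _ u]) auto
  then show ?thesis by auto
qed

lemma face_hull: fixes A :: "'a::euclidean_space set" assumes "finite A" "K face_of convex hull A" shows "K = convex hull (K \<inter> A)"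
proof -
  have cA: "compact A" using assms(1) by (rule finite_imp_compact)
  obtain S' where S': "S' \<subseteq> A" "K = convex hull S'"
    by (rule face_of_convex_hull_subset[OF cA assms(2)])
  have "S' \<subseteq> K" unfolding S'(2) by (rule hull_subset)
  then have "S' \<subseteq> K \<inter> A" using S'(1) by auto
  then have "convex hull S' \<subseteq> convex hull (K \<inter> A)" by (rule hull_mono)
  then have "K \<subseteq> convex hull (K \<inter> A)" using S'(2) by simp
  moreover have "convex hull (K \<inter> A) \<subseteq> K"
    using face_of_imp_convex[OF assms(2)] by (intro hull_minimal) auto
  ultimately show ?thesis by (rule antisym)
qed

lemma PdirW_nonneg: assumes "finite B" "x \<in> convex hull B" shows "PdirW B r x \<ge> 0"
proof -
  have ne: "proper_supports B x \<noteq> {}" using ps_nonempty assms by blast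
  have "0 \<le> Max {(r /\<^sub>R norm r) \<bullet> (s - v) | s v. s \<in> B \<and> v \<in> S}"
    if S: "S \<in> proper_supports B x" for S
  proof -
    obtain v where v: "v \<in> S" using ps_elem[OF S assms(1)] by blast
    then have vB: "v \<in> B" using ps_elem[OF S assms(1)] by blast
    have "0 \<in> {(r /\<^sub>R norm r) \<bullet> (s - v) | s v. s \<in> B \<and> v \<in> S}"
      using v vB by force
    moreover have "finite {(r /\<^sub>R norm r) \<bullet> (s - v) | s v. s \<in> B \<and> v \<in> S}"
      by (rule fin_pairs) (use assms ps_elem[OF S assms(1)] in auto)
    ultimately show ?thesis by (meson Max_ge)
  qed
  then show ?thesis unfolding PdirW_def
    using ne ps_finite[OF assms(1)] by (subst Min_ge_iff) auto
qed

lemma PWidth_nonneg: assumes "finite A" shows "0 \<le> PWidth A"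
  unfolding PWidth_def
proof (rule Inf_greatest, clarify)
  fix K x r assume "K face_of convex hull A" "x \<in> K"
  then have "x \<in> convex hull (K \<inter> A)" using face_hull[OF assms] by blast
  then have "0 \<le> PdirW (K \<inter> A) r x" by (rule PdirW_nonneg[rotated]) (use assms in simp)
  then show "0 \<le> ereal (PdirW (K \<inter> A) r x)" by simp
qed



theorem mainTheorem8:
  fixes A :: "'a::euclidean_space set" and f :: "'a \<Rightarrow> real" and f' :: "'a \<Rightarrow> 'a"
    and U :: "'a set" and \<mu> :: real
  assumes "finite A" and "A \<noteq> {}"
    and "open U" and "convex hull A \<subseteq> U"
    and "convex_on U f"
    and "\<And>x. x \<in> U \<Longrightarrow> (f has_derivative (\<lambda>h. f' x \<bullet> h)) (at x)"
    and "\<mu> \<ge> 0"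
    and "\<And>x y. x \<in> convex hull A \<Longrightarrow> y \<in> convex hull A \<Longrightarrow>
           f y - f x - f' x \<bullet> (y - x) \<ge> \<mu> / 2 * (norm (y - x))\<^sup>2"
  shows "muA A f f' \<ge> ereal \<mu> * (PWidth A)\<^sup>2"
  unfolding muA_def
proof (rule Inf_greatest, clarify)
  fix x xs assume x: "x \<in> convex hull A" and xs: "xs \<in> convex hull A"
    and neg: "f' x \<bullet> (xs - x) < 0"
  note finA = assms(1)
  define g where "g = f' x"
  define r where "r = - g"
  define e where "e = xs - x"
  have p_pos: "r \<bullet> e > 0" using neg unfolding r_def g_def e_def by simp
  define C where "C = conic hull ((\<lambda>y. y - x) ` (convex hull A))"
  have Cconv: "convex C" unfolding C_def
    by (intro convex_conic_hull convex_translation_subtract convex_convex_hull)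
  have "(\<lambda>y. y - x) ` (convex hull A) = (+) (-x) ` (convex hull A)"
    by (rule image_cong) auto
  then have "polytope ((\<lambda>y. y - x) ` (convex hull A))"
    using polytope_translation_eq polytope_convex_hull[OF finA] by metis
  then have Cclosed: "closed C" unfolding C_def using closed_conic_hull_strong by blast
  have inC: "y - x \<in> C" if "y \<in> convex hull A" for y
    unfolding C_def using that by (rule hull_inc[OF imageI])
  have Cne: "C \<noteq> {}" using inC[OF x] by blast
  define r' where "r' = closest_point C r"
  have r'C: "r' \<in> C" unfolding r'_def by (rule closest_point_in_set[OF Cclosed Cne])
  have var: "(r - r') \<bullet> (c - r') \<le> 0" if "c \<in> C" for c
    unfolding r'_def
    by (rule any_closest_point_dot[OF Cconv Cclosed closest_point_in_set[OF Cclosed Cne] that])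
       (use closest_point_le[OF Cclosed] in blast)
  have conC: "conic C" unfolding C_def by (rule conic_conic_hull)
  have "0 \<in> C" using conic_mul[OF conC r'C, of 0] by simp
  from var[OF this] have o1: "(r - r') \<bullet> r' \<ge> 0" by (simp add: inner_diff_right)
  have "2 *\<^sub>R r' \<in> C" using conic_mul[OF conC r'C, of 2] by simp
  from var[OF this] have o2: "(r - r') \<bullet> r' \<le> 0" by (simp add: inner_diff_right algebra_simps)
  have orth: "(r - r') \<bullet> r' = 0" using o1 o2 by linarith
  have polar: "(r - r') \<bullet> c \<le> 0" if "c \<in> C" for c
    using var[OF that] orth by (simp add: inner_diff_right)
  have Dle: "(r - r') \<bullet> (y - x) \<le> 0" if "y \<in> convex hull A" for y
    using polar[OF inC[OF that]] .
  have "r \<bullet> e \<le> r' \<bullet> e" using Dle[OF xs] unfolding e_def by (simp add: inner_diff_left)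
  also have "\<dots> \<le> norm r' * norm e" by (rule norm_cauchy_schwarz)
  finally have pq: "r \<bullet> e \<le> norm r' * norm e" .
  have r'ne: "r' \<noteq> 0" using pq p_pos by auto
  obtain t y where ty: "r' = t *\<^sub>R (y - x)" "0 \<le> t" "y \<in> convex hull A"
    using r'C unfolding C_def conic_hull_explicit by blast
  have tpos: "t > 0" using ty r'ne by (cases "t = 0") auto
  define K where "K = convex hull A \<inter> {z. (r - r') \<bullet> z = (r - r') \<bullet> x}"
  have Kface: "K face_of convex hull A" unfolding K_def
    by (rule face_of_Int_supporting_hyperplane_le) (use Dle in \<open>auto simp: inner_diff_right\<close>)
  have "t * ((r - r') \<bullet> (y - x)) = 0" using orth ty(1) by simp
  then have "(r - r') \<bullet> (y - x) = 0" using tpos by simp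
  then have yK: "y \<in> K" unfolding K_def using ty(3) by (simp add: inner_diff_right)
  have xK: "x \<in> K" unfolding K_def using x by simp
  have r'KC: "r' \<in> conic hull ((\<lambda>z. z - x) ` K)"
    unfolding conic_hull_explicit using ty(1,2) yK by blast
  have W_le: "PWidth A \<le> ereal (PdirW (K \<inter> A) r' x)"
    unfolding PWidth_def by (rule Inf_lower) (use Kface xK r'KC r'ne in blast)
  define ps where "ps = proper_supports A x"
  have psfin: "finite ps" unfolding ps_def by (rule ps_finite[OF finA])
  have psne: "ps \<noteq> {}" unfolding ps_def by (rule ps_nonempty[OF finA x])
  define M where "M S = Max ((\<lambda>v. g \<bullet> v) ` S)" for S
  have "Min (M ` ps) \<in> M ` ps" using psfin psne by (intro Min_in) auto
  then obtain S0 where S0: "S0 \<in> ps" "M S0 = Min (M ` ps)" by auto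
  have S0fin: "finite S0" and S0ne: "S0 \<noteq> {}" and S0A: "S0 \<subseteq> A"
    using ps_elem[OF S0(1)[unfolded ps_def] finA] by auto
  obtain c where c: "\<forall>v\<in>S0. c v > 0" "sum c S0 = 1" "(\<Sum>v\<in>S0. c v *\<^sub>R v) = x"
    using S0(1) unfolding ps_def proper_supports_def by blast
  define h where "h = r - r'"
  have "(\<Sum>w\<in>S0. c w * (h \<bullet> (w - x))) = h \<bullet> (\<Sum>w\<in>S0. c w *\<^sub>R (w - x))"
    by (simp add: inner_sum_right)
  also have "(\<Sum>w\<in>S0. c w *\<^sub>R (w - x)) = (\<Sum>w\<in>S0. c w *\<^sub>R w) - (\<Sum>w\<in>S0. c w) *\<^sub>R x"
    by (simp add: scaleR_diff_right sum_subtractf scaleR_sum_left)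
  also have "\<dots> = 0" using c by simp
  finally have sum0: "(\<Sum>w\<in>S0. - (c w * (h \<bullet> (w - x)))) = 0"
    by (simp add: sum_negf)
  have nonneg: "\<forall>w\<in>S0. 0 \<le> - (c w * (h \<bullet> (w - x)))"
  proof
    fix w assume w: "w \<in> S0"
    have "w \<in> convex hull A" using S0A w by (intro hull_inc) auto
    then have "h \<bullet> (w - x) \<le> 0" unfolding h_def by (rule Dle)
    moreover have "c w > 0" using c(1) w by blast
    ultimately show "0 \<le> - (c w * (h \<bullet> (w - x)))"
      by (simp add: mult_nonneg_nonpos)
  qed
  have S0h: "h \<bullet> (w - x) = 0" if w: "w \<in> S0" for w
  proof -
    have all0: "\<forall>w\<in>S0. - (c w * (h \<bullet> (w - x))) = 0"
      using sum_nonneg_eq_0_iff[OF S0fin, of "\<lambda>w. - (c w * (h \<bullet> (w - x)))"] nonneg sum0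
      by blast
    have "- (c w * (h \<bullet> (w - x))) = 0" using all0 w by blast
    moreover have "c w > 0" using c(1) w by blast
    ultimately show ?thesis by simp
  qed
  have S0K: "S0 \<subseteq> K"
  proof
    fix w assume w: "w \<in> S0"
    have "w \<in> convex hull A" using S0A w by (intro hull_inc) auto
    then show "w \<in> K" unfolding K_def using S0h[OF w] unfolding h_def
      by (simp add: inner_diff_right)
  qed
  have S0ps: "S0 \<in> proper_supports (K \<inter> A) x"
    unfolding proper_supports_def using S0K S0A c by (intro CollectI conjI exI[of _ c]) auto
  define Q where "Q = {(r' /\<^sub>R norm r') \<bullet> (s - v) | s v. s \<in> K \<inter> A \<and> v \<in> S0}"
  have Qfin: "finite Q" unfolding Q_def by (rule fin_pairs) (use finA S0fin in auto)
  obtain v1 where v1: "v1 \<in> S0" using S0ne by blast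
  have "(r' /\<^sub>R norm r') \<bullet> (v1 - v1) \<in> Q" unfolding Q_def using v1 S0K S0A by blast
  then have Qne: "Q \<noteq> {}" by blast
  have KAfin: "finite (K \<inter> A)" using finA by simp
  have PQ: "PdirW (K \<inter> A) r' x \<le> Max Q" unfolding PdirW_def Q_def
    by (rule Min_le) (use ps_finite[OF KAfin] S0ps in auto)
  have "Max Q \<in> Q" using Qfin Qne by (rule Max_in)
  then obtain s0 v0 where sv: "s0 \<in> K \<inter> A" "v0 \<in> S0" "Max Q = (r' /\<^sub>R norm r') \<bullet> (s0 - v0)"
    unfolding Q_def by blast
  have "(r - r') \<bullet> (s0 - v0) = (r - r') \<bullet> (s0 - x) - (r - r') \<bullet> (v0 - x)"
    by (simp add: inner_diff_right)
  also have "\<dots> = 0" using sv(1) S0h[OF sv(2)] unfolding K_def h_def by (simp add: inner_diff_right)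
  finally have rr: "r' \<bullet> (s0 - v0) = r \<bullet> (s0 - v0)" by (simp add: inner_diff_left)
  define den where "den = - (Min ((\<lambda>a. g \<bullet> a) ` A)) + Min (M ` ps)"
  have m1: "Min ((\<lambda>a. g \<bullet> a) ` A) \<le> g \<bullet> s0" using finA sv(1) by (intro Min_le) auto
  have m2: "g \<bullet> v0 \<le> M S0" unfolding M_def using S0fin sv(2) by (intro Max_ge) auto
  have rden: "r \<bullet> (s0 - v0) \<le> den" unfolding den_def r_def using S0(2) m1 m2
    by (simp add: inner_diff_right)
  have P_le: "PdirW (K \<inter> A) r' x \<le> den / norm r'"
  proof -
    have "Max Q = (r' \<bullet> (s0 - v0)) / norm r'" using sv(3) by (simp add: divide_inverse mult.commute)
    also have "\<dots> \<le> den / norm r'" using rr rden r'ne by (simp add: divide_right_mono)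
    finally show ?thesis using PQ by linarith
  qed
  have hullA: "convex hull A \<subseteq> {z. g \<bullet> z \<ge> Min ((\<lambda>a. g \<bullet> a) ` A)}"
    by (rule hull_minimal) (auto intro: Min_le simp: finA convex_halfspace_ge)
  have gxs: "g \<bullet> xs \<ge> Min ((\<lambda>a. g \<bullet> a) ` A)" using hullA xs by blast
  have "x \<in> convex hull S0" unfolding convex_hull_finite[OF S0fin]
    using c by (intro CollectI exI[of _ c]) (auto intro: less_imp_le)
  moreover have "convex hull S0 \<subseteq> {z. g \<bullet> z \<le> M S0}"
    by (rule hull_minimal) (auto intro: Max_ge simp: M_def S0fin convex_halfspace_le)
  ultimately have gx: "g \<bullet> x \<le> M S0" by blast
  have den_ge: "den \<ge> r \<bullet> e" unfolding den_def r_def e_def using gx gxs S0(2)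
    by (simp add: inner_diff_right)
  have gam: "gammaA A f' x xs = (r \<bullet> e) / den"
    unfolding gammaA_def den_def M_def ps_def r_def e_def g_def by simp
  have W0: "0 \<le> PWidth A" by (rule PWidth_nonneg[OF finA])
  have Wle: "PWidth A \<le> ereal (den / norm r')" using W_le P_le by (meson ereal_less_eq(3) order_trans)
  obtain w where w: "PWidth A = ereal w" using W0 Wle by (cases "PWidth A") auto
  have w0: "0 \<le> w" and wle: "w \<le> den / norm r'" using W0 Wle w by auto
  define p where "p = r \<bullet> e"
  define n where "n = norm e"
  define q where "q = norm r'"
  define B where "B = f xs - f x - f' x \<bullet> (xs - x)"
  have B: "B \<ge> \<mu> / 2 * n\<^sup>2" unfolding B_def n_def e_def by (rule assms(8)[OF x xs])
  have pp: "p > 0" using p_pos p_def by simp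
  have qp: "q > 0" using r'ne q_def by simp
  have pqn: "p \<le> q * n" using pq p_def q_def n_def by simp
  have dp: "den \<ge> p" using den_ge p_def by simp
  have dpos: "den > 0" using dp pp by linarith
  have n0: "n \<ge> 0" using n_def by simp
  have np: "n > 0" proof (rule ccontr)
    assume "\<not> n > 0" then have "n = 0" using n0 by simp
    then show False using pqn pp by simp
  qed
  have "den / q \<le> den * n / p"
    using pqn pp qp dpos by (simp add: divide_simps) (metis mult.commute mult_left_mono less_imp_le)
  moreover have "w \<le> den / q" using wle unfolding q_def .
  ultimately have w2: "w \<le> den * n / p" by linarith
  have "w\<^sup>2 \<le> (den * n / p)\<^sup>2" using w2 w0 by (simp add: power_mono)
  then have "\<mu> * w\<^sup>2 \<le> \<mu> * (den * n / p)\<^sup>2" using assms(7) by (rule mult_left_mono)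
  also have "\<dots> = (\<mu> * n\<^sup>2) * (den\<^sup>2 / p\<^sup>2)" by (simp add: power_divide power_mult_distrib)
  also have "\<dots> \<le> (2 * B) * (den\<^sup>2 / p\<^sup>2)" using B by (intro mult_right_mono) auto
  also have "\<dots> = 2 / (p / den)\<^sup>2 * B" using dpos pp by (simp add: power_divide field_simps)
  finally have fin: "\<mu> * w\<^sup>2 \<le> 2 / (gammaA A f' x xs)\<^sup>2 * B" unfolding gam p_def .
  show "ereal \<mu> * (PWidth A)\<^sup>2 \<le> ereal (2 / (gammaA A f' x xs)\<^sup>2 * (f xs - f x - f' x \<bullet> (xs - x)))"
    using fin unfolding w B_def by (simp add: power2_eq_square times_ereal.simps)
qed
end
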